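(* For every $\mathcal S\in\mathrm{TP}(n)$, the polyhedral cone in $\mathbb{R}^{\binom{[n]}{2}}$ defined by the system $F_{\mathcal S}$ is exactly $K_{\mathcal S}=\mathbb{R}(1,\dots,1)^T+\mathrm{cone}\{-v_C: C\in\mathcal S^\circ\}$.
   Context: A rooted tree on leaf set $[n]$ has leaves labeled bijectively by $[n]$ and internal vertices each with at least two children; a clade is the set of leaves below an internal vertex, and $\mathrm{clade}(T)$ is the set of clades (including $[n]$). $\mathrm{TP}(n)$ is the collection of sets $\mathcal S=\mathrm{clade}(T_1)\cup\mathrm{clade}(T_2)$ for rooted trees $T_1,T_2$ on leaf set $[n]$; $\mathcal S^\circ=\mathcal S\setminus\{[n]\}$. For $C\subseteq[n]$, $v_C\in\mathbb{R}^{\binom{[n]}{2}}$ is the characteristic vector of $\binom{C}{2}$. The clade intersection poset $\mathrm{cip}(\mathcal S)$ consists of $\mathcal S$ together with all intersections of elements of $\mathcal S$ having at least two elements, ordered by inclusion; $\mathrm{cip}(\mathcal S)^\circ=\mathrm{cip}(\mathcal S)\setminus\{[n]\}$. It is a join-semilattice; $A\vee B$ denotes the join (least element containing both). For a pair $i\ne j$, $\overline{ij}$ is the smallest element of $\mathrm{cip}(\mathcal S)$ containing $\{i,j\}$; every $C\in\mathrm{cip}(\mathcal S)$ equals $\overline{ij}$ for some pair, and for each $C$ we write $\delta_C:=\delta_{ij}$ for a fixed such pair $ij$. For $C\in\mathrm{cip}(\mathcal S)^\circ$, its parents $D_1,\dots,D_r$ are the elements of $\mathrm{cip}(\mathcal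 S)$ covering $C$; set $D_\emptyset=C$ and $D_I=\bigvee_{i\in I}D_i$ for nonempty $I\subseteq[r]$. The system $F_{\mathcal S}$ on $\delta\in\mathbb{R}^{\binom{[n]}{2}}$ consists of: (a) $\delta_{ij}=\delta_{kl}$ whenever $\overline{ij}=\overline{kl}$; (b) for each $C\in\mathcal S^\circ$ with parents $D_1,\dots,D_r$, the inequality $\sum_{I\subseteq[r]}(-1)^{|I|}\delta_{D_I}\le 0$; (c) for each $C\in\mathrm{cip}(\mathcal S)\setminus\mathcal S$ with parents $D_1,\dots,D_r$, the equation $\sum_{I\subseteq[r]}(-1)^{|I|}\delta_{D_I}=0$. *)

theory Defs
  imports Complex_Main
begin

text \<open>A rooted tree: leaves carry labels; an internal vertex is a node with a list of
  children (the order of the list is irrelevant).\<close>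
datatype ltree = Leaf nat | Node "ltree list"

fun leaves :: "ltree \<Rightarrow> nat set" where
  "leaves (Leaf i) = {i}"
| "leaves (Node ts) = (\<Union>t\<in>set ts. leaves t)"

fun wf_tree :: "ltree \<Rightarrow> bool" where
  "wf_tree (Leaf i) = True"
| "wf_tree (Node ts) = (2 \<le> length ts \<and> (\<forall>t\<in>set ts. wf_tree t) \<and>
      (\<forall>i<length ts. \<forall>j<length ts. i \<noteq> j \<longrightarrow> leaves (ts ! i) \<inter> leaves (ts ! j) = {}))"

fun clades :: "ltree \<Rightarrow> nat set set" where
  "clades (Leaf i) = {}"
| "clades (Node ts) = insert (leaves (Node ts)) (\<Union>t\<in>set ts. clades t)"

definition rooted_tree_on :: "nat \<Rightarrow> ltree \<Rightarrow> bool" where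
  "rooted_tree_on n T \<longleftrightarrow> wf_tree T \<and> leaves T = {1..n}"

definition TP :: "nat \<Rightarrow> nat set set set" where
  "TP n = {clades T1 \<union> clades T2 | T1 T2. rooted_tree_on n T1 \<and> rooted_tree_on n T2}"

definition cip :: "nat set set \<Rightarrow> nat set set" where
  "cip S = S \<union> {\<Inter>F | F. F \<subseteq> S \<and> F \<noteq> {} \<and> 2 \<le> card (\<Inter>F)}"

definition least_above :: "nat set set \<Rightarrow> nat set \<Rightarrow> nat set" where
  "least_above P A = (THE C. C \<in> P \<and> A \<subseteq> C \<and> (\<forall>C'\<in>P. A \<subseteq> C' \<longrightarrow> C \<subseteq> C'))"

definition join_cip :: "nat set set \<Rightarrow> nat set set \<Rightarrow> nat set" where
  "join_cip P X = least_above P (\<Union>X)"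

definition parents :: "nat set set \<Rightarrow> nat set \<Rightarrow> nat set set" where
  "parents P C = {D \<in> P. C \<subset> D \<and> \<not> (\<exists>E\<in>P. C \<subset> E \<and> E \<subset> D)}"

definition pairs :: "nat \<Rightarrow> nat set set" where
  "pairs n = {p. p \<subseteq> {1..n} \<and> card p = 2}"

text \<open>The space \<open>\<real>^(binom [n] 2)\<close>: functions on sets vanishing outside 2-subsets of [n].\<close>
definition pair_space :: "nat \<Rightarrow> (nat set \<Rightarrow> real) set" where
  "pair_space n = {\<delta>. \<forall>p. p \<notin> pairs n \<longrightarrow> \<delta> p = 0}"

definition pair_closure :: "nat set set \<Rightarrow> nat set \<Rightarrow> nat set" where
  "pair_closure S p = least_above (cip S) p"

definition delta_of :: "nat \<Rightarrow> nat set set \<Rightarrow> (nat set \<Rightarrow> real) \<Rightarrow> nat set \<Rightarrow> real" where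
  "delta_of n S \<delta> C = \<delta> (SOME p. p \<in> pairs n \<and> pair_closure S p = C)"

definition D_of :: "nat set set \<Rightarrow> nat set \<Rightarrow> nat set set \<Rightarrow> nat set" where
  "D_of S C I = (if I = {} then C else join_cip (cip S) I)"

definition incl_excl :: "nat \<Rightarrow> nat set set \<Rightarrow> (nat set \<Rightarrow> real) \<Rightarrow> nat set \<Rightarrow> real" where
  "incl_excl n S \<delta> C =
     (\<Sum>I\<in>Pow (parents (cip S) C). (-1) ^ card I * delta_of n S \<delta> (D_of S C I))"

definition F_cone :: "nat \<Rightarrow> nat set set \<Rightarrow> (nat set \<Rightarrow> real) set" where
  "F_cone n S = {\<delta> \<in> pair_space n.
     (\<forall>p\<in>pairs n. \<forall>q\<in>pairs n. pair_closure S p = pair_closure S q \<longrightarrow> \<delta> p = \<delta> q) \<and>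
     (\<forall>C\<in>S - {{1..n}}. incl_excl n S \<delta> C \<le> 0) \<and>
     (\<forall>C\<in>cip S - S. incl_excl n S \<delta> C = 0)}"

definition v_vec :: "nat \<Rightarrow> nat set \<Rightarrow> nat set \<Rightarrow> real" where
  "v_vec n C = (\<lambda>p. if p \<in> pairs n \<and> p \<subseteq> C then 1 else 0)"

definition ones_vec :: "nat \<Rightarrow> nat set \<Rightarrow> real" where
  "ones_vec n = (\<lambda>p. if p \<in> pairs n then 1 else 0)"

text \<open>\<open>K_S = \<real>(1,\<dots>,1) + cone{-v_C : C \<in> S\<degree>}\<close> (S is finite, so the conical hull is the
  set of nonnegative combinations).\<close>
definition K_cone :: "nat \<Rightarrow> nat set set \<Rightarrow> (nat set \<Rightarrow> real) set" where
  "K_cone n S = {(\<lambda>p. t * ones_vec n p + (\<Sum>C\<in>S - {{1..n}}. c C * (- v_vec n C p))) | t c.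
                  \<forall>C\<in>S - {{1..n}}. 0 \<le> c C}"

end

theory Submission
  imports Defs
begin


lemma leaves_finite: "finite (leaves T)"
  by (induction T) auto

lemma clades_finite: "finite (clades T)"
  by (induction T) auto

lemma clades_sub: "X \<in> clades T \<Longrightarrow> X \<subseteq> leaves T"
  by (induction T arbitrary: X) fastforce+

lemma leaves_ne: "wf_tree T \<Longrightarrow> leaves T \<noteq> {}"
proof (induction T)
  case (Leaf x)
  then show ?case by simp
next
  case (Node ts)
  then have "ts \<noteq> []" by auto
  then obtain t where "t \<in> set ts" by (cases ts) auto
  then show ?case using Node by auto
qed

lemma node_card:
  assumes "wf_tree (Node ts)"
  shows "2 \<le> card (leaves (Node ts))"
proof -
  have len: "2 \<le> length ts" using assms by simp
  have i0: "ts ! 0 \<in> set ts" and i1: "ts ! 1 \<in> set ts" using len by (auto intro!: nth_mem)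
  have w0: "wf_tree (ts ! 0)" and w1: "wf_tree (ts ! 1)" using assms i0 i1 by auto
  obtain a where a: "a \<in> leaves (ts ! 0)" using leaves_ne[OF w0] by auto
  obtain b where b: "b \<in> leaves (ts ! 1)" using leaves_ne[OF w1] by auto
  have "leaves (ts ! 0) \<inter> leaves (ts ! 1) = {}"
    using assms len by (simp del: One_nat_def) (metis One_nat_def less_2_cases_iff zero_neq_one less_le_trans numeral_2_eq_2 lessI)
  then have ab: "a \<noteq> b" using a b by auto
  have "{a, b} \<subseteq> leaves (Node ts)" using a b i0 i1 by auto
  then have "card {a, b} \<le> card (leaves (Node ts))"
    using leaves_finite card_mono by blast
  then show ?thesis using ab by simp
qed

lemma clades_card: "wf_tree T \<Longrightarrow> X \<in> clades T \<Longrightarrow> 2 \<le> card X"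
proof (induction T arbitrary: X)
  case (Leaf x)
  then show ?case by simp
next
  case (Node ts)
  show ?case
  proof (cases "X = leaves (Node ts)")
    case True
    then show ?thesis using node_card Node.prems by simp
  next
    case False
    then obtain t where "t \<in> set ts" "X \<in> clades t" using Node.prems by auto
    then show ?thesis using Node by auto
  qed
qed

lemma clades_lam:
  "wf_tree T \<Longrightarrow> X \<in> clades T \<Longrightarrow> Y \<in> clades T \<Longrightarrow> X \<subseteq> Y \<or> Y \<subseteq> X \<or> X \<inter> Y = {}"
proof (induction T arbitrary: X Y)
  case (Leaf x)
  then show ?case by simp
next
  case (Node ts)
  show ?case
  proof (cases "X = leaves (Node ts) \<or> Y = leaves (Node ts)")
    case True
    then show ?thesis using clades_sub Node.prems by blast
  next
    case False
    then obtain t t' where t: "t \<in> set ts" "X \<in> clades t" and t': "t' \<in> set ts" "Y \<in> clades t'"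
      using Node.prems by auto
    show ?thesis
    proof (cases "t = t'")
      case True
      then show ?thesis using Node t t' by auto
    next
      case False
      obtain i where i: "i < length ts" "t = ts ! i" using t by (auto simp: in_set_conv_nth)
      obtain j where j: "j < length ts" "t' = ts ! j" using t' by (auto simp: in_set_conv_nth)
      have "i \<noteq> j" using False i j by auto
      then have "leaves t \<inter> leaves t' = {}" using Node.prems i j by auto
      then show ?thesis using clades_sub t t' by blast
    qed
  qed
qed

lemma root_in: "wf_tree T \<Longrightarrow> 2 \<le> card (leaves T) \<Longrightarrow> leaves T \<in> clades T"
  by (cases T) auto



definition lubS :: "nat set set \<Rightarrow> nat set \<Rightarrow> nat set" where
  "lubS S A = \<Inter>{X\<in>S. A \<subseteq> X}"

lemma altsum: "finite J \<Longrightarrow> (\<Sum>I\<in>Pow J. (-1::real) ^ card I) = (if J = {} then 1 else 0)"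
proof (induction J rule: finite_induct)
  case empty
  then show ?case by simp
next
  case (insert x F)
  have inj: "inj_on (insert x) (Pow F)"
  proof (rule inj_onI)
    fix A B assume "A \<in> Pow F" "B \<in> Pow F" "insert x A = insert x B"
    then show "A = B" using insert.hyps(2) by (metis Diff_insert_absorb PowD subsetD)
  qed
  have disj: "Pow F \<inter> insert x ` Pow F = {}" using insert.hyps by auto
  have "(\<Sum>I\<in>insert x ` Pow F. (-1::real) ^ card I) = (\<Sum>I\<in>Pow F. (-1::real) ^ card (insert x I))"
    using sum.reindex[OF inj] by simp
  also have "\<dots> = (\<Sum>I\<in>Pow F. - ((-1::real) ^ card I))"
  proof (rule sum.cong)
    fix I assume "I \<in> Pow F"
    then have "x \<notin> I" "finite I" using insert.hyps finite_subset by auto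
    then show "(-1::real) ^ card (insert x I) = - ((-1::real) ^ card I)" by simp
  qed simp
  finally have "(\<Sum>I\<in>Pow (insert x F). (-1::real) ^ card I) = 0"
    using insert.hyps disj by (simp add: Pow_insert sum.union_disjoint sum_negf)
  then show ?case by simp
qed

locale tpair =
  fixes n :: nat and S L1 L2 :: "nat set set"
  assumes finS: "finite S"
  and topS: "{1..n} \<in> S"
  and subS: "\<And>X. X \<in> S \<Longrightarrow> X \<subseteq> {1..n}"
  and cardS: "\<And>X. X \<in> S \<Longrightarrow> 2 \<le> card X"
  and SL: "S = L1 \<union> L2"
  and lam1: "\<And>X Y. X \<in> L1 \<Longrightarrow> Y \<in> L1 \<Longrightarrow> X \<subseteq> Y \<or> Y \<subseteq> X \<or> X \<inter> Y = {}"
  and lam2: "\<And>X Y. X \<in> L2 \<Longrightarrow> Y \<in> L2 \<Longrightarrow> X \<subseteq> Y \<or> Y \<subseteq> X \<or> X \<inter> Y = {}"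
begin

abbreviation U where "U \<equiv> {1..n}"

lemma cip_cases:
  assumes "E \<in> cip S"
  obtains F where "F \<subseteq> S" "F \<noteq> {}" "E = \<Inter>F"
proof -
  from assms consider "E \<in> S" | "\<exists>F. F \<subseteq> S \<and> F \<noteq> {} \<and> E = \<Inter>F"
    unfolding cip_def by blast
  then show thesis
  proof cases
    case 1
    then show ?thesis using that[of "{E}"] by auto
  next
    case 2
    then show ?thesis using that by blast
  qed
qed

lemma cip_props: assumes "E \<in> cip S" shows "E \<subseteq> U" "2 \<le> card E"
proof -
  obtain F where F: "F \<subseteq> S" "F \<noteq> {}" "E = \<Inter>F" using cip_cases assms by blast
  then obtain X where "X \<in> F" by auto
  then show "E \<subseteq> U" using F subS by blast
  show "2 \<le> card E" using assms cardS unfolding cip_def by auto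
qed

lemma U_cip: "U \<in> cip S" using topS by (auto simp: cip_def)

lemma S_cip: "S \<subseteq> cip S" by (auto simp: cip_def)

lemma fin_cip: "finite (cip S)"
  by (rule finite_subset[of _ "Pow U"]) (use cip_props in auto)

lemma lub_props:
  assumes "A \<subseteq> U" "2 \<le> card A"
  shows "lubS S A \<in> cip S" "A \<subseteq> lubS S A" "\<And>X. X \<in> cip S \<Longrightarrow> A \<subseteq> X \<Longrightarrow> lubS S A \<subseteq> X"
proof -
  let ?F = "{X\<in>S. A \<subseteq> X}"
  have ne: "U \<in> ?F" using topS assms by auto
  show A: "A \<subseteq> lubS S A" unfolding lubS_def by auto
  have "lubS S A \<subseteq> U" using ne unfolding lubS_def by auto
  then have "card A \<le> card (lubS S A)" using A card_mono finite_subset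
    by (metis finite_atLeastAtMost)
  then have "2 \<le> card (\<Inter>?F)" using assms unfolding lubS_def by simp
  then show "lubS S A \<in> cip S" unfolding cip_def lubS_def using ne by blast
  fix X assume X: "X \<in> cip S" "A \<subseteq> X"
  obtain F where F: "F \<subseteq> S" "F \<noteq> {}" "X = \<Inter>F" using cip_cases X(1) by blast
  have "\<And>M. M \<in> F \<Longrightarrow> \<Inter>?F \<subseteq> M" using F X(2) by blast
  then show "lubS S A \<subseteq> X" unfolding lubS_def using F by blast
qed

lemma least_above_lub:
  assumes "A \<subseteq> U" "2 \<le> card A"
  shows "least_above (cip S) A = lubS S A"
  unfolding least_above_def
  by (rule the_equality) (use lub_props[OF assms] in blast)+

lemma lub_self: "E \<in> cip S \<Longrightarrow> lubS S E = E"
  using lub_props[of E] cip_props[of E] by blast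

lemma lub_le_iff:
  assumes "A \<subseteq> U" "2 \<le> card A" "X \<in> cip S"
  shows "lubS S A \<subseteq> X \<longleftrightarrow> A \<subseteq> X"
  using lub_props[OF assms(1,2)] assms(3) by blast

lemma par_sub: "parents (cip S) E \<subseteq> cip S" by (auto simp: parents_def)

lemma fin_par: "finite (parents (cip S) E)" by (rule finite_subset[OF par_sub fin_cip])

lemma par_psub: "D \<in> parents (cip S) E \<Longrightarrow> E \<subset> D" by (auto simp: parents_def)

lemma par_exists:
  assumes E: "E \<in> cip S" and X: "X \<in> cip S" and EX: "E \<subset> X"
  shows "\<exists>D\<in>parents (cip S) E. D \<subseteq> X"
proof -
  define M where "M = {Y\<in>cip S. E \<subset> Y \<and> Y \<subseteq> X}"
  have fin: "finite M" unfolding M_def by (rule finite_subset[OF _ fin_cip]) blast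
  have XM: "X \<in> M" unfolding M_def using X EX by blast
  then have ne: "M \<noteq> {}" by blast
  obtain m where m1: "m \<in> M" and m2: "\<forall>b\<in>M. b \<le> m \<longrightarrow> m = b"
    using finite_has_minimal[OF fin ne] by blast
  have mc: "m \<in> cip S" "E \<subset> m" "m \<subseteq> X" using m1 unfolding M_def by blast+
  have nz: "\<not> (\<exists>Z\<in>cip S. E \<subset> Z \<and> Z \<subset> m)"
  proof
    assume "\<exists>Z\<in>cip S. E \<subset> Z \<and> Z \<subset> m"
    then obtain Z where Z: "Z \<in> cip S" "E \<subset> Z" "Z \<subset> m" by blast
    have "Z \<subseteq> X" using Z(3) mc(3) by (meson order.trans psubset_imp_subset)
    then have "Z \<in> M" unfolding M_def using Z(1,2) by blast
    then have "m = Z" using m2 Z(3) psubset_imp_subset by blast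
    then show False using Z(3) by blast
  qed
  have "m \<in> parents (cip S) E" unfolding parents_def using mc(1,2) nz by blast
  then show ?thesis using mc(3) by blast
qed

lemma par_ne: assumes "E \<in> cip S" "E \<noteq> U" shows "parents (cip S) E \<noteq> {}"
proof -
  have "E \<subset> U" using cip_props(1)[OF assms(1)] assms(2) by (rule psubsetI)
  then obtain D where "D \<in> parents (cip S) E" using par_exists[OF assms(1) U_cip] by blast
  then show ?thesis by blast
qed

lemma D_props:
  assumes "E \<in> cip S" "I \<subseteq> parents (cip S) E" "I \<noteq> {}"
  shows "D_of S E I = lubS S (\<Union>I)" "D_of S E I \<in> cip S" "E \<subset> D_of S E I"
    "\<And>X. X \<in> cip S \<Longrightarrow> D_of S E I \<subseteq> X \<longleftrightarrow> (\<forall>D\<in>I. D \<subseteq> X)"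
proof -
  obtain D where D: "D \<in> I" using assms by auto
  have sub: "\<Union>I \<subseteq> U" using assms par_sub cip_props by blast
  have "card D \<le> card (\<Union>I)" using D sub card_mono finite_subset
    by (metis Union_upper finite_atLeastAtMost)
  then have c2: "2 \<le> card (\<Union>I)" using D assms par_sub cip_props by force
  show eq: "D_of S E I = lubS S (\<Union>I)" unfolding D_of_def join_cip_def
    using assms least_above_lub[OF sub c2] by simp
  show "D_of S E I \<in> cip S" using eq lub_props[OF sub c2] by simp
  have "E \<subset> D" using par_psub D assms(2) by blast
  moreover have "D \<subseteq> D_of S E I" using eq lub_props(2)[OF sub c2] D by blast
  ultimately show "E \<subset> D_of S E I" by (rule psubset_subset_trans)
  fix X assume X: "X \<in> cip S"
  show "D_of S E I \<subseteq> X \<longleftrightarrow> (\<forall>D\<in>I. D \<subseteq> X)"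
    by (simp only: eq lub_le_iff[OF sub c2 X] Sup_le_iff)
qed

lemma D_in: assumes "E \<in> cip S" "I \<subseteq> parents (cip S) E" shows "D_of S E I \<in> cip S"
proof (cases "I = {}")
  case True
  then show ?thesis using assms(1) by (simp add: D_of_def)
next
  case False
  show ?thesis using D_props(2)[OF assms False] .
qed

lemma core:
  assumes E: "E \<in> cip S" and X: "X \<in> cip S"
  shows "(\<Sum>I\<in>Pow (parents (cip S) E). if D_of S E I \<subseteq> X then (-1::real) ^ card I else 0)
         = (if X = E then 1 else 0)"
proof (cases "E \<subseteq> X")
  case True
  let ?P = "parents (cip S) E"
  let ?J = "{D\<in>?P. D \<subseteq> X}"
  have iff: "\<And>I. I \<in> Pow ?P \<Longrightarrow> D_of S E I \<subseteq> X \<longleftrightarrow> I \<subseteq> ?J"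
  proof -
    fix I assume I: "I \<in> Pow ?P"
    show "D_of S E I \<subseteq> X \<longleftrightarrow> I \<subseteq> ?J"
    proof (cases "I = {}")
      case True
      then show ?thesis using \<open>E \<subseteq> X\<close> by (simp add: D_of_def)
    next
      case False
      then show ?thesis using D_props(4)[OF E _ False X] I by auto
    qed
  qed
  have "(\<Sum>I\<in>Pow ?P. if D_of S E I \<subseteq> X then (-1::real) ^ card I else 0)
      = (\<Sum>I\<in>Pow ?P. if I \<subseteq> ?J then (-1::real) ^ card I else 0)"
    by (rule sum.cong) (use iff in auto)
  also have "\<dots> = (\<Sum>I\<in>{I\<in>Pow ?P. I \<subseteq> ?J}. (-1::real) ^ card I)"
    by (rule sum.inter_filter[symmetric]) (simp add: fin_par)
  also have "{I\<in>Pow ?P. I \<subseteq> ?J} = Pow ?J" by auto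
  also have "(\<Sum>I\<in>Pow ?J. (-1::real) ^ card I) = (if ?J = {} then 1 else 0)"
    using altsum[of ?J] fin_par by simp
  also have "(?J = {}) = (X = E)"
  proof
    assume "?J = {}"
    then show "X = E" using par_exists[OF E X] True by blast
  next
    assume "X = E"
    then show "?J = {}" using par_psub by blast
  qed
  finally show ?thesis .
next
  case False
  have "\<And>I. I \<in> Pow (parents (cip S) E) \<Longrightarrow> \<not> D_of S E I \<subseteq> X"
  proof
    fix I assume I: "I \<in> Pow (parents (cip S) E)" "D_of S E I \<subseteq> X"
    show False
    proof (cases "I = {}")
      case True
      then show False using I False by (simp add: D_of_def)
    next
      case ne: False
      then show False using D_props(3)[OF E _ ne] I False by auto
    qed
  qed
  then show ?thesis using False by auto
qed

lemma lin:
  assumes E: "E \<in> cip S" "E \<noteq> U" and T: "T \<subseteq> cip S"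
  shows "(\<Sum>I\<in>Pow (parents (cip S) E). (-1::real) ^ card I * (a + (\<Sum>X\<in>{X\<in>T. D_of S E I \<subseteq> X}. w X)))
         = (if E \<in> T then w E else 0)"
proof -
  let ?P = "parents (cip S) E"
  have finT: "finite T" using T fin_cip finite_subset by blast
  have "(\<Sum>I\<in>Pow ?P. (-1::real) ^ card I * (a + (\<Sum>X\<in>{X\<in>T. D_of S E I \<subseteq> X}. w X)))
     = a * (\<Sum>I\<in>Pow ?P. (-1::real) ^ card I)
       + (\<Sum>I\<in>Pow ?P. \<Sum>X\<in>T. w X * (if D_of S E I \<subseteq> X then (-1::real) ^ card I else 0))"
  proof -
    have "\<And>I. (-1::real) ^ card I * (a + (\<Sum>X\<in>{X\<in>T. D_of S E I \<subseteq> X}. w X))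
       = a * (-1::real) ^ card I + (\<Sum>X\<in>T. w X * (if D_of S E I \<subseteq> X then (-1::real) ^ card I else 0))"
    proof -
      fix I
      have "(\<Sum>X\<in>{X\<in>T. D_of S E I \<subseteq> X}. w X) = (\<Sum>X\<in>T. if D_of S E I \<subseteq> X then w X else 0)"
        by (rule sum.inter_filter[OF finT])
      then show "(-1::real) ^ card I * (a + (\<Sum>X\<in>{X\<in>T. D_of S E I \<subseteq> X}. w X))
       = a * (-1::real) ^ card I + (\<Sum>X\<in>T. w X * (if D_of S E I \<subseteq> X then (-1::real) ^ card I else 0))"
        by (simp add: distrib_left sum_distrib_left if_distrib mult.commute cong: if_cong)
    qed
    then show ?thesis by (simp add: sum.distrib sum_distrib_left)
  qed
  also have "(\<Sum>I\<in>Pow ?P. (-1::real) ^ card I) = 0" using altsum[OF fin_par] par_ne[OF E] by simp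
  also have "(\<Sum>I\<in>Pow ?P. \<Sum>X\<in>T. w X * (if D_of S E I \<subseteq> X then (-1::real) ^ card I else 0))
      = (\<Sum>X\<in>T. w X * (\<Sum>I\<in>Pow ?P. (if D_of S E I \<subseteq> X then (-1::real) ^ card I else 0)))"
    by (subst sum.swap) (simp add: sum_distrib_left)
  also have "\<dots> = (\<Sum>X\<in>T. w X * (if X = E then 1 else 0))"
  proof (rule sum.cong)
    fix X assume "X \<in> T"
    then have "X \<in> cip S" using T by blast
    then show "w X * (\<Sum>I\<in>Pow ?P. (if D_of S E I \<subseteq> X then (-1::real) ^ card I else 0))
        = w X * (if X = E then 1 else 0)" using core[OF E(1)] by simp
  qed simp
  also have "\<dots> = (if E \<in> T then w E else 0)"
    using finT by (simp add: if_distrib cong: if_cong) 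
  finally show ?thesis by simp
qed

end


lemma lam_sep:
  assumes finL: "finite L" and lam: "\<And>X Y. X\<in>L \<Longrightarrow> Y\<in>L \<Longrightarrow> X \<subseteq> Y \<or> Y \<subseteq> X \<or> X \<inter> Y = {}"
    and i: "i \<in> E" and j0: "j0 \<in> E" "j0 \<noteq> i"
  shows "\<exists>j\<in>E. j \<noteq> i \<and> \<not>(\<exists>X\<in>L. i\<in>X \<and> j\<in>X \<and> \<not> E \<subseteq> X)"
proof (rule ccontr)
  assume "\<not> ?thesis"
  then have all: "\<forall>j\<in>E. j \<noteq> i \<longrightarrow> (\<exists>X\<in>L. i\<in>X \<and> j\<in>X \<and> \<not> E\<subseteq>X)" by blast
  let ?F = "{X\<in>L. i\<in>X \<and> \<not>E\<subseteq>X}"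
  have "?F \<noteq> {}" using all j0 by blast
  then obtain M where M: "M \<in> ?F" "\<forall>b\<in>?F. M \<subseteq> b \<longrightarrow> M = b"
    using finite_has_maximal[of ?F] finL by auto
  have "E \<subseteq> M"
  proof
    fix j assume "j\<in>E"
    show "j \<in> M"
    proof (cases "j = i")
      case True then show ?thesis using M by auto
    next
      case False
      then obtain X where X: "X\<in>L" "i\<in>X" "j\<in>X" "\<not>E\<subseteq>X" using all \<open>j\<in>E\<close> by blast
      then have XF: "X \<in> ?F" by auto
      have "X \<subseteq> M \<or> M \<subseteq> X \<or> X\<inter>M = {}" using lam X(1) M(1) by auto
      then show ?thesis using X M XF by blast
    qed
  qed
  then show False using M by auto
qed

lemma lam_trans:
  assumes lam: "\<And>X Y. X\<in>L \<Longrightarrow> Y\<in>L \<Longrightarrow> X \<subseteq> Y \<or> Y \<subseteq> X \<or> X \<inter> Y = {}"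
    and "\<exists>X\<in>L. i\<in>X \<and> j\<in>X \<and> \<not>E\<subseteq>X" "\<exists>X\<in>L. j\<in>X \<and> l\<in>X \<and> \<not>E\<subseteq>X"
  shows "\<exists>X\<in>L. i\<in>X \<and> l\<in>X \<and> \<not>E\<subseteq>X"
proof -
  obtain X where X: "X\<in>L" "i\<in>X" "j\<in>X" "\<not>E\<subseteq>X" using assms(2) by blast
  obtain Y where Y: "Y\<in>L" "j\<in>Y" "l\<in>Y" "\<not>E\<subseteq>Y" using assms(3) by blast
  have "X \<subseteq> Y \<or> Y \<subseteq> X \<or> X \<inter> Y = {}" using lam X(1) Y(1) by blast
  then show ?thesis using X Y by blast
qed

context tpair begin

lemma moebius:
  fixes f g :: "nat set \<Rightarrow> real"
  assumes g_def: "\<And>X. g X = (\<Sum>I\<in>Pow (parents (cip S) X). (-1::real)^card I * f (D_of S X I))"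
  assumes "E \<in> cip S"
  shows "f E = f U + (\<Sum>X\<in>{X\<in>cip S - {U}. E \<subseteq> X}. g X)"
using assms(2)
proof (induction "card U - card E" arbitrary: E rule: less_induct)
  case less
  let ?Phi = "\<lambda>Y. f U + (\<Sum>X\<in>{X\<in>cip S - {U}. Y \<subseteq> X}. g X)"
  show ?case
  proof (cases "E = U")
    case True
    have e: "{X\<in>cip S - {U}. E \<subseteq> X} = {}" using True cip_props by blast
    show ?thesis unfolding e using True by simp
  next
    case False
    let ?P = "parents (cip S) E"
    have IH: "\<And>I. I \<in> Pow ?P \<Longrightarrow> I \<noteq> {} \<Longrightarrow> f (D_of S E I) = ?Phi (D_of S E I)"
    proof -
      fix I assume I: "I \<in> Pow ?P" "I \<noteq> {}"
      have D: "D_of S E I \<in> cip S" "E \<subset> D_of S E I" using D_props[OF less.prems _ I(2)] I(1) by auto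
      have "card E < card (D_of S E I)" using D psubset_card_mono cip_props finite_subset
        by (metis finite_atLeastAtMost)
      moreover have "card (D_of S E I) \<le> card U" using D(1) cip_props card_mono
        by (metis finite_atLeastAtMost)
      ultimately have "card U - card (D_of S E I) < card U - card E" by linarith
      then show "f (D_of S E I) = ?Phi (D_of S E I)" using less.hyps D(1) by blast
    qed
    have per: "\<And>I. (-1::real)^card I * (?Phi (D_of S E I) + (if I = {} then f E - ?Phi E else 0))
         = (-1::real)^card I * ?Phi (D_of S E I) + (if I = {} then f E - ?Phi E else 0)"
      by (case_tac "I = {}") simp_all
    have eqI: "\<And>I. I \<in> Pow ?P \<Longrightarrow> (-1::real)^card I * f (D_of S E I) = (-1::real)^card I * (?Phi (D_of S E I) + (if I = {} then f E - ?Phi E else 0))"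
    proof -
      fix I assume I: "I \<in> Pow ?P"
      show "(-1::real)^card I * f (D_of S E I) = (-1::real)^card I * (?Phi (D_of S E I) + (if I = {} then f E - ?Phi E else 0))"
      proof (cases "I = {}")
        case True
        then show ?thesis by (simp add: D_of_def)
      next
        case False
        then show ?thesis using IH[OF I False] by simp
      qed
    qed
    have "g E = (\<Sum>I\<in>Pow ?P. (-1::real)^card I * f (D_of S E I))" by (rule g_def)
    also have "\<dots> = (\<Sum>I\<in>Pow ?P. (-1::real)^card I * (?Phi (D_of S E I) + (if I = {} then f E - ?Phi E else 0)))"
      by (rule sum.cong[OF refl eqI])
    also have "\<dots> = (\<Sum>I\<in>Pow ?P. (-1::real)^card I * ?Phi (D_of S E I)) + (\<Sum>I\<in>Pow ?P. (if I = {} then f E - ?Phi E else 0))"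
      by (simp only: per sum.distrib)
    also have "(\<Sum>I\<in>Pow ?P. (if I = {} then f E - ?Phi E else 0)) = f E - ?Phi E"
      using fin_par by (simp add: sum.delta)
    also have "(\<Sum>I\<in>Pow ?P. (-1::real)^card I * ?Phi (D_of S E I)) = g E"
      using lin[OF less.prems False, of "cip S - {U}" "f U" g] less.prems False by simp
    finally show ?thesis by simp
  qed
qed

lemma pc:
  assumes "p \<in> pairs n"
  shows "pair_closure S p = lubS S p" "lubS S p \<in> cip S" "\<And>X. X \<in> cip S \<Longrightarrow> lubS S p \<subseteq> X \<longleftrightarrow> p \<subseteq> X"
proof -
  have p: "p \<subseteq> U" "2 \<le> card p" using assms by (auto simp: pairs_def)
  show "pair_closure S p = lubS S p" unfolding pair_closure_def using least_above_lub[OF p] .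
  show "lubS S p \<in> cip S" using lub_props[OF p] by simp
  fix X assume "X \<in> cip S" then show "lubS S p \<subseteq> X \<longleftrightarrow> p \<subseteq> X" using lub_le_iff[OF p] by simp
qed

lemma witness:
  assumes E: "E \<in> cip S"
  shows "\<exists>p\<in>pairs n. lubS S p = E"
proof -
  define R1 where "R1 i j \<longleftrightarrow> (\<exists>X\<in>L1. i\<in>X \<and> j\<in>X \<and> \<not>E\<subseteq>X)" for i j
  define R2 where "R2 i j \<longleftrightarrow> (\<exists>X\<in>L2. i\<in>X \<and> j\<in>X \<and> \<not>E\<subseteq>X)" for i j
  have finL1: "finite L1" and finL2: "finite L2" using finS unfolding SL by simp_all
  have cE: "2 \<le> card E" "E \<subseteq> U" using cip_props[OF E] by simp_all
  have other: "\<exists>j\<in>E. j \<noteq> i" if i: "i \<in> E" for i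
  proof (rule ccontr)
    assume "\<not> (\<exists>j\<in>E. j \<noteq> i)"
    then have "E \<subseteq> {i}" by blast
    then have "card E \<le> card {i}" by (intro card_mono) simp_all
    then show False using cE by simp
  qed
  have sep1: "\<exists>j\<in>E. j\<noteq>i \<and> \<not>R1 i j" if i: "i\<in>E" for i
  proof -
    obtain j0 where j0: "j0\<in>E" "j0\<noteq>i" using other[OF i] by blast
    show ?thesis unfolding R1_def by (rule lam_sep[OF finL1 lam1 i j0])
  qed
  have sep2: "\<exists>j\<in>E. j\<noteq>i \<and> \<not>R2 i j" if i: "i\<in>E" for i
  proof -
    obtain j0 where j0: "j0\<in>E" "j0\<noteq>i" using other[OF i] by blast
    show ?thesis unfolding R2_def by (rule lam_sep[OF finL2 lam2 i j0])
  qed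
  have sym1: "R1 j i" if "R1 i j" for i j using that unfolding R1_def by blast
  have tr1: "R1 i l" if "R1 i j" "R1 j l" for i j l
    using lam_trans[where L=L1 and i=i and j=j and l=l and E=E, OF lam1] that unfolding R1_def by blast
  have tr2: "R2 i l" if "R2 i j" "R2 j l" for i j l
    using lam_trans[where L=L2 and i=i and j=j and l=l and E=E, OF lam2] that unfolding R2_def by blast
  have "E \<noteq> {}"
  proof
    assume "E = {}" then show False using cE(1) by simp
  qed
  then obtain i where i: "i \<in> E" by blast
  obtain j where j: "j\<in>E" "j\<noteq>i" "\<not>R1 i j" using sep1[OF i] by blast
  have key: "\<exists>a\<in>E. \<exists>b\<in>E. a\<noteq>b \<and> \<not>R1 a b \<and> \<not>R2 a b"
  proof (cases "R2 i j")
    case False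
    have "i \<noteq> j" using j(2) by simp
    then show ?thesis using i j(1) j(3) False by blast
  next
    case True
    obtain k where k: "k\<in>E" "k\<noteq>i" "\<not>R2 i k" using sep2[OF i] by blast
    show ?thesis
    proof (cases "R1 i k")
      case False
      have "i \<noteq> k" using k(2) by simp
      then show ?thesis using i k(1) k(3) False by blast
    next
      case R1ik: True
      have jk: "j \<noteq> k"
      proof
        assume "j = k" then show False using R1ik j(3) by simp
      qed
      have n1: "\<not> R1 j k"
      proof
        assume "R1 j k"
        then have "R1 k j" by (rule sym1)
        with R1ik have "R1 i j" by (rule tr1)
        with j(3) show False by simp
      qed
      have n2: "\<not> R2 j k"
      proof
        assume "R2 j k"
        with True have "R2 i k" by (rule tr2)
        with k(3) show False by simp
      qed
      show ?thesis using j(1) k(1) jk n1 n2 by blast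
    qed
  qed
  then obtain a b where ab: "a\<in>E" "b\<in>E" "a\<noteq>b" "\<not>R1 a b" "\<not>R2 a b" by blast
  have "{a,b} \<subseteq> U" using ab cE(2) by blast
  moreover have "card {a,b} = 2" using ab(3) by simp
  ultimately have p: "{a,b} \<in> pairs n" unfolding pairs_def by blast
  have "{a,b} \<subseteq> E" using ab by simp
  then have "lubS S {a,b} \<subseteq> E" using pc(3)[OF p E] by simp
  moreover have "E \<subseteq> lubS S {a,b}"
    unfolding lubS_def
  proof (rule Inter_greatest)
    fix X assume "X \<in> {X \<in> S. {a, b} \<subseteq> X}"
    then have X: "X \<in> L1 \<or> X \<in> L2" "a \<in> X" "b \<in> X" using SL by auto
    show "E \<subseteq> X"
    proof (rule ccontr)
      assume "\<not> E \<subseteq> X"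
      then have "R1 a b \<or> R2 a b" using X unfolding R1_def R2_def by blast
      then show False using ab by blast
    qed
  qed
  ultimately show ?thesis using p by blast
qed

lemma dof:
  assumes "E \<in> cip S"
  shows "\<exists>q\<in>pairs n. lubS S q = E \<and> delta_of n S \<delta> E = \<delta> q"
proof -
  have ex: "\<exists>q. q \<in> pairs n \<and> pair_closure S q = E" using witness[OF assms] pc(1) by metis
  let ?q = "SOME q. q \<in> pairs n \<and> pair_closure S q = E"
  have q: "?q \<in> pairs n" "pair_closure S ?q = E" using someI_ex[OF ex] by auto
  show ?thesis
  proof (rule bexI[of _ ?q])
    show "lubS S ?q = E \<and> delta_of n S \<delta> E = \<delta> ?q"
      using q pc(1)[OF q(1)] unfolding delta_of_def by simp
  qed (rule q(1))
qed

lemma Kval: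
  assumes p: "p \<in> pairs n"
  shows "t * ones_vec n p + (\<Sum>C\<in>S - {U}. c C * (- v_vec n C p))
       = t + (\<Sum>X\<in>{X\<in>S - {U}. lubS S p \<subseteq> X}. - c X)"
proof -
  have "(\<Sum>C\<in>S - {U}. c C * (- v_vec n C p)) = (\<Sum>C\<in>S - {U}. if lubS S p \<subseteq> C then - c C else 0)"
  proof (rule sum.cong[OF refl])
    fix C assume "C \<in> S - {U}"
    then have C: "C \<in> cip S" using S_cip by blast
    show "c C * (- v_vec n C p) = (if lubS S p \<subseteq> C then - c C else 0)"
      using pc(3)[OF p C] p by (simp add: v_vec_def)
  qed
  also have "\<dots> = (\<Sum>X\<in>{X\<in>S - {U}. lubS S p \<subseteq> X}. - c X)"
    by (rule sum.inter_filter[symmetric]) (simp add: finS)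
  finally show ?thesis using p by (simp add: ones_vec_def)
qed

lemma Kzero:
  assumes p: "p \<notin> pairs n"
  shows "t * ones_vec n p + (\<Sum>C\<in>S - {U}. c C * (- v_vec n C p)) = 0"
  using p by (simp add: ones_vec_def v_vec_def)

theorem main: "F_cone n S = K_cone n S"
proof
  show "F_cone n S \<subseteq> K_cone n S"
  proof
    fix \<delta> assume "\<delta> \<in> F_cone n S"
    then have ps: "\<delta> \<in> pair_space n"
      and a: "\<forall>p\<in>pairs n. \<forall>q\<in>pairs n. pair_closure S p = pair_closure S q \<longrightarrow> \<delta> p = \<delta> q"
      and b: "\<forall>C\<in>S - {U}. incl_excl n S \<delta> C \<le> 0"
      and cc: "\<forall>C\<in>cip S - S. incl_excl n S \<delta> C = 0" unfolding F_cone_def by blast+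
    define t where "t = delta_of n S \<delta> U"
    define c where "c = (\<lambda>C. - incl_excl n S \<delta> C)"
    have mo: "delta_of n S \<delta> E = t + (\<Sum>X\<in>{X\<in>cip S - {U}. E \<subseteq> X}. incl_excl n S \<delta> X)"
      if E: "E \<in> cip S" for E
      unfolding t_def
      by (rule moebius[where f = "delta_of n S \<delta>" and g = "incl_excl n S \<delta>", OF _ E]) (simp add: incl_excl_def)
    have red: "(\<Sum>X\<in>{X\<in>cip S - {U}. E \<subseteq> X}. incl_excl n S \<delta> X) = (\<Sum>X\<in>{X\<in>S - {U}. E \<subseteq> X}. incl_excl n S \<delta> X)"
      for E
    proof (rule sum.mono_neutral_right)
      show "finite {X\<in>cip S - {U}. E \<subseteq> X}" using fin_cip by simp
      show "{X\<in>S - {U}. E \<subseteq> X} \<subseteq> {X\<in>cip S - {U}. E \<subseteq> X}" using S_cip by blast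
      show "\<forall>i\<in>{X\<in>cip S - {U}. E \<subseteq> X} - {X\<in>S - {U}. E \<subseteq> X}. incl_excl n S \<delta> i = 0"
        using cc by blast
    qed
    have eq: "\<delta> = (\<lambda>p. t * ones_vec n p + (\<Sum>C\<in>S - {U}. c C * (- v_vec n C p)))"
    proof
      fix p
      show "\<delta> p = t * ones_vec n p + (\<Sum>C\<in>S - {U}. c C * (- v_vec n C p))"
      proof (cases "p \<in> pairs n")
        case False
        then have "\<delta> p = 0" using ps by (simp add: pair_space_def)
        then show ?thesis using Kzero[OF False] by simp
      next
        case True
        let ?E = "lubS S p"
        have E: "?E \<in> cip S" using pc(2)[OF True] .
        obtain q where q: "q \<in> pairs n" "lubS S q = ?E" "delta_of n S \<delta> ?E = \<delta> q"
          using dof[OF E] by blast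
        have "pair_closure S q = pair_closure S p" using pc(1)[OF q(1)] pc(1)[OF True] q(2) by simp
        then have "\<delta> q = \<delta> p" using a q(1) True by blast
        then have "\<delta> p = t + (\<Sum>X\<in>{X\<in>S - {U}. ?E \<subseteq> X}. incl_excl n S \<delta> X)"
          using mo[OF E] red[of ?E] q(3) by simp
        also have "\<dots> = t + (\<Sum>X\<in>{X\<in>S - {U}. ?E \<subseteq> X}. - c X)"
          unfolding c_def by simp
        also have "\<dots> = t * ones_vec n p + (\<Sum>C\<in>S - {U}. c C * (- v_vec n C p))"
          using Kval[OF True, of t c] by simp
        finally show ?thesis .
      qed
    qed
    have "\<forall>C\<in>S - {U}. 0 \<le> c C" using b unfolding c_def by auto
    then show "\<delta> \<in> K_cone n S" unfolding K_cone_def using eq by blast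
  qed
next
  show "K_cone n S \<subseteq> F_cone n S"
  proof
    fix \<delta> assume "\<delta> \<in> K_cone n S"
    then obtain t c where dd: "\<delta> = (\<lambda>p. t * ones_vec n p + (\<Sum>C\<in>S - {U}. c C * (- v_vec n C p)))"
      and c: "\<forall>C\<in>S - {U}. 0 \<le> c C" unfolding K_cone_def by blast
    define h where "h = (\<lambda>E. t + (\<Sum>X\<in>{X\<in>S - {U}. E \<subseteq> X}. - c X))"
    have hp: "\<delta> p = h (lubS S p)" if p: "p \<in> pairs n" for p
      unfolding dd h_def using Kval[OF p, of t c] by simp
    have hE: "delta_of n S \<delta> E = h E" if E: "E \<in> cip S" for E
    proof -
      obtain q where q: "q \<in> pairs n" "lubS S q = E" "delta_of n S \<delta> E = \<delta> q"
        using dof[OF E] by blast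
      then show ?thesis using hp[OF q(1)] by simp
    qed
    have ie: "incl_excl n S \<delta> E = (if E \<in> S - {U} then - c E else 0)"
      if E: "E \<in> cip S" "E \<noteq> U" for E
    proof -
      have "incl_excl n S \<delta> E = (\<Sum>I\<in>Pow (parents (cip S) E). (-1::real)^card I *
              (t + (\<Sum>X\<in>{X\<in>S - {U}. D_of S E I \<subseteq> X}. - c X)))"
        unfolding incl_excl_def
      proof (rule sum.cong[OF refl])
        fix I assume "I \<in> Pow (parents (cip S) E)"
        then have "D_of S E I \<in> cip S" using D_in[OF E(1)] by blast
        then show "(-1::real)^card I * delta_of n S \<delta> (D_of S E I) = (-1::real)^card I *
              (t + (\<Sum>X\<in>{X\<in>S - {U}. D_of S E I \<subseteq> X}. - c X))"
          using hE by (simp add: h_def)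
      qed
      also have "\<dots> = (if E \<in> S - {U} then - c E else 0)"
        by (rule lin[OF E]) (use S_cip in blast)
      finally show ?thesis .
    qed
    have 1: "\<delta> \<in> pair_space n" unfolding pair_space_def dd by (simp add: ones_vec_def v_vec_def)
    have 2: "\<forall>p\<in>pairs n. \<forall>q\<in>pairs n. pair_closure S p = pair_closure S q \<longrightarrow> \<delta> p = \<delta> q"
      using hp pc(1) by metis
    have 3: "\<forall>C\<in>S - {U}. incl_excl n S \<delta> C \<le> 0"
    proof
      fix C assume C: "C \<in> S - {U}"
      then have "C \<in> cip S" "C \<noteq> U" using S_cip by blast+
      then show "incl_excl n S \<delta> C \<le> 0" using ie C c by simp
    qed
    have 4: "\<forall>C\<in>cip S - S. incl_excl n S \<delta> C = 0"
    proof
      fix C assume C: "C \<in> cip S - S"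
      then have "C \<in> cip S" "C \<noteq> U" using topS by blast+
      then show "incl_excl n S \<delta> C = 0" using ie C by simp
    qed
    show "\<delta> \<in> F_cone n S" unfolding F_cone_def using 1 2 3 4 by blast
  qed
qed

end

theorem proposition3p12:
  fixes n :: nat and S :: "nat set set"
  assumes "S \<in> TP n"
  shows "F_cone n S = K_cone n S"
proof -
  obtain T1 T2 where S: "S = clades T1 \<union> clades T2" and r1: "rooted_tree_on n T1"
      and r2: "rooted_tree_on n T2"
    using assms unfolding TP_def by blast
  have w1: "wf_tree T1" "leaves T1 = {1..n}" using r1 unfolding rooted_tree_on_def by auto
  have w2: "wf_tree T2" "leaves T2 = {1..n}" using r2 unfolding rooted_tree_on_def by auto
  show ?thesis
  proof (cases "n < 2")
    case True
    have cl: "False" if T: "wf_tree T" "leaves T = {1..n}" "X \<in> clades T" for T X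
    proof -
      have "2 \<le> card X" "X \<subseteq> {1..n}" using clades_card[OF T(1,3)] clades_sub[OF T(3)] T(2) by auto
      then have "2 \<le> card {1..n}" using card_mono[of "{1..n}" X] by simp
      then show False using True by simp
    qed
    have S0: "S = {}" using cl w1 w2 S by blast
    have P0: "pairs n = {}"
    proof -
      have False if p: "p \<in> pairs n" for p
      proof -
        have "p \<subseteq> {1..n}" "card p = 2" using p by (auto simp: pairs_def)
        then have "2 \<le> card {1..n}" using card_mono[of "{1..n}" p] by simp
        then show False using True by simp
      qed
      then show ?thesis by blast
    qed
    have cip0: "cip {} = {}" by (auto simp: cip_def)
    have "F_cone n S = {\<lambda>_. 0}" unfolding S0 F_cone_def pair_space_def P0 cip0 by (auto intro: ext)
    moreover have "K_cone n S = {\<lambda>_. 0}" unfolding S0 K_cone_def ones_vec_def P0 by auto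
    ultimately show ?thesis by simp
  next
    case False
    have tp: "tpair n S (clades T1) (clades T2)"
    proof (unfold_locales)
      show "finite S" using S clades_finite by simp
      have "2 \<le> card (leaves T1)" using w1(2) False by simp
      then show "{1..n} \<in> S" using root_in[OF w1(1)] w1(2) S by auto
      show "\<And>X. X \<in> S \<Longrightarrow> X \<subseteq> {1..n}" using S clades_sub w1(2) w2(2) by blast
      show "\<And>X. X \<in> S \<Longrightarrow> 2 \<le> card X" using S clades_card w1(1) w2(1) by blast
      show "S = clades T1 \<union> clades T2" by (rule S)
      show "\<And>X Y. X \<in> clades T1 \<Longrightarrow> Y \<in> clades T1 \<Longrightarrow> X \<subseteq> Y \<or> Y \<subseteq> X \<or> X \<inter> Y = {}"
        using clades_lam[OF w1(1)] by blast
      show "\<And>X Y. X \<in> clades T2 \<Longrightarrow> Y \<in> clades T2 \<Longrightarrow> X \<subseteq> Y \<or> Y \<subseteq> X \<or> X \<inter> Y = {}"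
        using clades_lam[OF w2(1)] by blast
    qed
    show ?thesis by (rule tpair.main[OF tp])
  qed
qed

end
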